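(* Let $T\in(0,\infty]$. Let $v:M\times[0,T)\to\mathbb R\cup\{+\infty\}$ be lower semicontinuous, a BJ subsolution of $$u_t+H(x,D_xu,u)=0\quad\text{in }M\times(0,T),$$ and bounded from below on $M\times[0,T)$. Let $C_0,C_1>0$ be constants such that $H(x,p,0)\ge -C_0$ for all $(x,p)\in T^*M$ and $v\ge -C_1$ on $M\times[0,T)$. Fix $y\in M$. (a) If $\liminf_{t\to0+}v(y,t)<\infty$, then for all $t\in(0,T)$, $$v(y,t)\le e^{\Lambda t}\liminf_{s\to0+}v(y,s)+(C_0\Lambda^{-1}+2C_1)(e^{\Lambda t}-1).$$ (b) For any $s\in(0,T)$ with $v(y,s)<\infty$, and for all $t\in(s,T)$, $$v(y,t)\le v(y,s)e^{\Lambda(t-s)}+(C_0\Lambda^{-1}+2C_1)(e^{\Lambda(t-s)}-1).$$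
   Context: $M$ is a connected, closed smooth Riemannian manifold, and $|\cdot|$ denotes the induced norms on the fibers of $T^*M$. $H:T^*M\times\mathbb R\to\mathbb R$ satisfies: (H1) $H$ is continuous. (H2) For every $R>0$ there is $K>0$ with $H(x,p,u)>R$ whenever $|u|\le R$ and $|p|\ge K$. (H3) $p\mapsto H(x,p,u)$ is convex on $T^*_xM$ for each $(x,u)$. (H4) There is $\Lambda>0$ with $|H(x,p,u)-H(x,p,v)|\le\Lambda|u-v|$ for all $(x,p)$ and $u,v\in\mathbb R$. The constant $\Lambda$ in the claim is this Lipschitz constant. A lower semicontinuous $u:M\times(0,T)\to\mathbb R\cup\{+\infty\}$ is a BJ subsolution of $u_t+H(x,D_xu,u)=0$ in $M\times(0,T)$ if, whenever $\phi\in C^1(M\times(0,T),\mathbb R)$ and $u-\phi$ attains its minimum at $(x,t)$, one has $\phi_t(x,t)+H(x,D_x\phi(x,t),u(x,t))\le0$. For functions on $M\times[0,T)$, this refers to restrictions to $M\times(0,T)$. *)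

theory Defs
  imports "HOL-Analysis.Analysis"
begin

fun dirder :: "'a::real_normed_vector list \<Rightarrow> ('a \<Rightarrow> 'b::real_normed_vector) \<Rightarrow> 'a \<Rightarrow> 'b" where
  "dirder [] F = F"
| "dirder (v # vs) F = (\<lambda>x. frechet_derivative (dirder vs F) (at x) v)"

definition smooth_on :: "'a::real_normed_vector set \<Rightarrow> ('a \<Rightarrow> 'b::real_normed_vector) \<Rightarrow> bool" where
  "smooth_on U F \<longleftrightarrow>
     (\<forall>vs. (\<forall>x\<in>U. dirder vs F differentiable (at x)) \<and> continuous_on U (dirder vs F))"

text \<open>It carries the
  Riemannian metric induced by the ambient inner product.\<close>
definition closed_submanifold :: "'a::euclidean_space set \<Rightarrow> bool" where
  "closed_submanifold M \<longleftrightarrow> compact M \<and> connected M \<and> M \<noteq> {} \<and>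
     (\<forall>x\<in>M. \<exists>U (F::'a \<Rightarrow> 'a) r. open U \<and> x \<in> U \<and> smooth_on U F \<and>
        (\<forall>z\<in>U. dim (range (frechet_derivative F (at z))) = r) \<and>
        M \<inter> U = {z\<in>U. F z = 0})"

text \<open>Tangent space at x: velocities of differentiable curves in M through x.
  Covectors are identified with tangent vectors via the induced metric.\<close>
definition tangent_space :: "'a::euclidean_space set \<Rightarrow> 'a \<Rightarrow> 'a set" where
  "tangent_space M x = {v. \<exists>\<gamma>::real \<Rightarrow> 'a. (\<forall>t. \<gamma> t \<in> M) \<and> \<gamma> 0 = x \<and>
                              (\<gamma> has_vector_derivative v) (at 0)}"

definition lsc_on :: "'b::topological_space set \<Rightarrow> ('b \<Rightarrow> ereal) \<Rightarrow> bool" where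
  "lsc_on S u \<longleftrightarrow> (\<forall>z\<in>S. \<forall>c. c < u z \<longrightarrow> eventually (\<lambda>w. c < u w) (at z within S))"

definition stdom :: "'a set \<Rightarrow> ereal \<Rightarrow> ('a \<times> real) set" where
  "stdom M T = M \<times> {t. 0 < t \<and> ereal t < T}"

text \<open>C^1 test functions on M x (0,T): restrictions of C^1 functions on an open
  neighbourhood of M x (0,T) in the ambient space (equivalent, via a tubular
  neighbourhood projection, to intrinsic C^1 functions). phi' is the derivative.\<close>
definition C1_test :: "'a::euclidean_space set \<Rightarrow> ereal \<Rightarrow> ('a \<times> real \<Rightarrow> real)
                        \<Rightarrow> ('a \<times> real \<Rightarrow> ('a \<times> real) \<Rightarrow>\<^sub>L real) \<Rightarrow> bool" where
  "C1_test M T \<phi> \<phi>' \<longleftrightarrow> (\<exists>W. open W \<and> stdom M T \<subseteq> W \<and>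
      (\<forall>z\<in>W. (\<phi> has_derivative blinfun_apply (\<phi>' z)) (at z)) \<and> continuous_on W \<phi>')"

text \<open>The time derivative of phi is
  phi'(x,t)(0,1); D_x phi(x,t) is the covector v |-> phi'(x,t)(v,0) on T_xM, represented
  (via the metric) by the tangent vector p with p . v = phi'(x,t)(v,0).\<close>
definition BJ_subsol :: "'a::euclidean_space set \<Rightarrow> ('a \<Rightarrow> 'a \<Rightarrow> real \<Rightarrow> real) \<Rightarrow> ereal
                          \<Rightarrow> ('a \<times> real \<Rightarrow> ereal) \<Rightarrow> bool" where
  "BJ_subsol M H T u \<longleftrightarrow> lsc_on (stdom M T) u \<and>
     (\<forall>\<phi> \<phi>' x t. C1_test M T \<phi> \<phi>' \<and> (x, t) \<in> stdom M T \<and> u (x, t) \<noteq> \<infinity> \<and>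
        (\<forall>z\<in>stdom M T. u (x, t) - ereal (\<phi> (x, t)) \<le> u z - ereal (\<phi> z)) \<longrightarrow>
        (\<forall>p\<in>tangent_space M x. (\<forall>v\<in>tangent_space M x. p \<bullet> v = \<phi>' (x, t) (v, 0)) \<longrightarrow>
           \<phi>' (x, t) (0, 1) + H x p (real_of_ereal (u (x, t))) \<le> 0))"

end

theory Submission
  imports Defs
begin


lemma rank_nullity_eu:
  fixes f :: "'a::euclidean_space \<Rightarrow> 'b::euclidean_space"
  assumes lf: "linear f"
  shows "dim {x. f x = 0} + dim (range f) = DIM('a)"
proof -
  let ?N = "{x. f x = 0}"
  let ?O = "{y. \<forall>x\<in>?N. orthogonal x y}"
  have sN: "subspace ?N" using lf by (simp add: linear_subspace_kernel)
  have sO: "subspace ?O" by (auto simp: subspace_def orthogonal_def inner_add_right)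
  have d1: "dim ?O + dim ?N = DIM('a)"
    using dim_subspace_orthogonal_to_vectors[OF sN subspace_UNIV] by simp
  have inj: "inj_on f (span ?O)"
  proof (rule inj_onI)
    fix a b assume a: "a \<in> span ?O" and b: "b \<in> span ?O" and e: "f a = f b"
    have "span ?O = ?O" using sO by (rule span_eq_iff[THEN iffD2])
    then have "a \<in> ?O" "b \<in> ?O" using a b by blast+
    then have "a - b \<in> ?O" by (auto simp: orthogonal_def inner_diff_right)
    moreover have "a - b \<in> ?N" using e lf by (simp add: linear_diff)
    ultimately have "orthogonal (a - b) (a - b)" by blast
    then show "a = b" by (simp add: orthogonal_def)
  qed
  have im: "f ` ?O = range f"
  proof
    show "range f \<subseteq> f ` ?O"
    proof
      fix y assume "y \<in> range f"
      then obtain x where y: "y = f x" by blast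
      obtain a b where "a \<in> span ?N" and orth: "\<And>w. w \<in> span ?N \<Longrightarrow> orthogonal b w" and "x = a + b"
        using orthogonal_subspace_decomp_exists [of ?N x] by blast
      have "span ?N = ?N" using sN by (rule span_eq_iff[THEN iffD2])
      then have "a \<in> ?N" using \<open>a \<in> span ?N\<close> by blast
      then have "f x = f b" using \<open>x = a + b\<close> lf by (simp add: linear_add)
      moreover have "b \<in> ?O"
      proof -
        have "orthogonal x' b" if "f x' = 0" for x'
          using orth[of x'] that span_base[of x' ?N] orthogonal_commute by blast
        then show ?thesis by blast
      qed
      ultimately show "y \<in> f ` ?O" using y by blast
    qed
  qed auto
  have "dim (f ` ?O) = dim ?O" using dim_image_eq[OF lf inj] .
  then show ?thesis using d1 im by simp
qed

lemma orth_proj_exists: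
  fixes K :: "'a::euclidean_space set"
  assumes sK: "subspace K"
  obtains P where "linear P" "\<And>h. P h \<in> K" "\<And>h k. k \<in> K \<Longrightarrow> (h - P h) \<bullet> k = 0"
    "\<And>k. k \<in> K \<Longrightarrow> P k = k"
proof -
  obtain B where B: "B \<subseteq> K" "pairwise orthogonal B" "\<And>x. x \<in> B \<Longrightarrow> norm x = 1"
    "independent B" "card B = dim K" "span B = K"
    using orthonormal_basis_subspace[OF sK] by metis
  have fB: "finite B" using B(4) independent_imp_finite by blast
  define P where "P h = (\<Sum>b\<in>B. (h \<bullet> b) *\<^sub>R b)" for h
  have lin: "linear P"
  proof (rule linearI)
    show "P (x + y) = P x + P y" for x y
      by (simp add: P_def inner_add_left scaleR_add_left sum.distrib)
    show "P (c *\<^sub>R x) = c *\<^sub>R P x" for c x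
      by (simp add: P_def scaleR_sum_right)
  qed
  have inK: "P h \<in> K" for h
  proof -
    have "P h \<in> span B" unfolding P_def
      by (intro span_sum span_scale span_base)
    then show ?thesis using B(6) by simp
  qed
  have ob: "(h - P h) \<bullet> b' = 0" if "b' \<in> B" for h b'
  proof -
    have "P h \<bullet> b' = (\<Sum>b\<in>B. (h \<bullet> b) * (b \<bullet> b'))" unfolding P_def by (simp add: inner_sum_left)
    also have "\<dots> = (\<Sum>b\<in>B. if b = b' then h \<bullet> b' else 0)"
    proof (rule sum.cong)
      fix b assume "b \<in> B"
      show "(h \<bullet> b) * (b \<bullet> b') = (if b = b' then h \<bullet> b' else 0)"
      proof (cases "b = b'")
        case True then show ?thesis using B(3)[OF that] by (simp add: dot_square_norm)
      next
        case False then show ?thesis using B(2) \<open>b \<in> B\<close> that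
          by (auto simp: pairwise_def orthogonal_def)
      qed
    qed simp
    also have "\<dots> = h \<bullet> b'" using fB that by simp
    finally show ?thesis by (simp add: inner_diff_left)
  qed
  have ok: "(h - P h) \<bullet> k = 0" if "k \<in> K" for h k
  proof -
    have "k \<in> span B" using B(6) that by simp
    have "orthogonal (h - P h) k"
      by (rule orthogonal_to_span[OF \<open>k \<in> span B\<close>]) (simp add: orthogonal_def ob)
    then show ?thesis by (simp add: orthogonal_def)
  qed
  have id: "P k = k" if "k \<in> K" for k
  proof -
    have "k - P k \<in> K" using that inK sK by (simp add: subspace_diff)
    then have "(k - P k) \<bullet> (k - P k) = 0" using ok by blast
    then show ?thesis by simp
  qed
  show ?thesis by (rule that[OF lin inK ok id])
qed

lemma tangent_sub_ker:
  fixes F :: "'a::euclidean_space \<Rightarrow> 'b::real_normed_vector"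
  assumes U: "open U" "x \<in> U" and MU: "M \<inter> U = {z\<in>U. F z = 0}"
    and dF: "F differentiable (at x)"
    and w: "w \<in> tangent_space M x"
  shows "frechet_derivative F (at x) w = 0"
proof -
  obtain \<gamma> where g: "\<And>t. \<gamma> t \<in> M" "\<gamma> 0 = x" "(\<gamma> has_vector_derivative w) (at 0)"
    using w unfolding tangent_space_def by blast
  have gd: "(\<gamma> has_derivative (\<lambda>t. t *\<^sub>R w)) (at 0)"
    using g(3) by (simp add: has_vector_derivative_def)
  have "continuous (at 0) \<gamma>" using gd by (rule has_derivative_continuous)
  then have "(\<gamma> \<longlongrightarrow> x) (at 0)" using g(2) by (simp add: continuous_at)
  then have ev: "eventually (\<lambda>t. \<gamma> t \<in> U) (at 0)"
    using topological_tendstoD U by blast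
  have ev0: "eventually (\<lambda>t. 0 = F (\<gamma> t)) (at 0)"
  proof (rule eventually_mono[OF ev])
    fix t assume "\<gamma> t \<in> U"
    then have "\<gamma> t \<in> M \<inter> U" using g(1) by blast
    then show "0 = F (\<gamma> t)" using MU by auto
  qed
  have "(F has_derivative frechet_derivative F (at x)) (at (\<gamma> 0))"
    using dF g(2) by (simp add: frechet_derivative_works)
  then have d1: "((\<lambda>t. F (\<gamma> t)) has_derivative (\<lambda>t. frechet_derivative F (at x) (t *\<^sub>R w))) (at 0)"
    by (rule has_derivative_compose[OF gd])
  have "x \<in> M \<inter> U" using g(1)[of 0] g(2) U(2) by simp
  then have "F x = 0" using MU by auto
  then have d2: "((\<lambda>t. F (\<gamma> t)) has_derivative (\<lambda>t. 0)) (at 0)"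
    using has_derivative_transform_eventually[of "\<lambda>t. 0" "\<lambda>t. 0" 0 UNIV "\<lambda>t. F (\<gamma> t)", OF _ ev0]
    g(2) by simp
  have "(\<lambda>t. frechet_derivative F (at x) (t *\<^sub>R w)) = (\<lambda>t. 0)"
    using has_derivative_unique[OF d1 d2] .
  from fun_cong[OF this, of 1] show ?thesis by simp
qed

lemma inj_range_lemma:
  fixes A L P :: "'a::euclidean_space \<Rightarrow> 'a"
  assumes lA: "linear A" and lL: "linear L" and lP: "linear P"
    and rk: "dim (range A) = dim (range L)"
    and PK: "\<And>h. L (P h) = 0"
    and inj: "inj (\<lambda>h. adjoint L (A h) + P h)"
    and u0: "adjoint L u = 0" and u: "u \<in> range A"
  shows "u = 0"
proof (rule ccontr)
  assume nz: "u \<noteq> 0"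
  obtain h where uh: "u = A h" using u by blast
  let ?N = "{k. A k = 0}"
  let ?K = "{k. L k = 0}"
  let ?S = "insert h ?N"
  let ?Psi = "\<lambda>h. adjoint L (A h) + P h"
  have lLa: "linear (adjoint L)" using lL by (rule adjoint_linear)
  have "linear (adjoint L \<circ> A)" using lA lLa by (rule linear_compose)
  then have "linear (\<lambda>h. adjoint L (A h))" by (simp add: o_def)
  then have lPsi: "linear ?Psi" using lP by (rule linear_compose_add)
  have sN: "subspace ?N" using lA by (simp add: linear_subspace_kernel)
  have sK: "subspace ?K" using lL by (simp add: linear_subspace_kernel)
  have spN: "span ?N = ?N" using sN by (rule span_eq_iff[THEN iffD2])
  have "h \<notin> ?N" using nz uh by simp
  then have "h \<notin> span ?N" using spN by (metis (no_types, lifting))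
  then have dS: "dim ?S = dim ?N + 1" by (simp add: dim_insert)
  have sub: "?Psi ` ?S \<subseteq> ?K"
  proof
    fix y assume "y \<in> ?Psi ` ?S"
    then obtain k where k: "k \<in> ?S" "y = ?Psi k" by blast
    have "adjoint L (A k) = 0"
    proof (cases "k = h")
      case True then show ?thesis using u0 uh by simp
    next
      case False then have "A k = 0" using k by blast
      then show ?thesis using lLa by (simp add: linear_0)
    qed
    then show "y \<in> ?K" using k PK by simp
  qed
  have e1: "dim (?Psi ` ?S) = dim ?S"
    by (rule dim_image_eq[OF lPsi inj_on_subset[OF inj subset_UNIV]])
  have e2: "dim (?Psi ` ?S) \<le> dim ?K" using sub by (rule dim_subset)
  have e3: "dim ?N + dim (range A) = DIM('a)" using rank_nullity_eu[OF lA] .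
  have e4: "dim ?K + dim (range L) = DIM('a)" using rank_nullity_eu[OF lL] .
  have "dim ?N = dim ?K" using e3 e4 rk by simp
  then have "dim ?S \<le> dim ?N" using e1 e2 by simp
  then show False using dS by simp
qed

lemma ker_sub_tangent:
  fixes F :: "'a::euclidean_space \<Rightarrow> 'a"
  assumes U: "open U" "x \<in> U" and xM: "x \<in> M" and MU: "M \<inter> U = {z\<in>U. F z = 0}"
    and sm: "smooth_on U F"
    and rk: "\<forall>z\<in>U. dim (range (frechet_derivative F (at z))) = r"
    and w: "frechet_derivative F (at x) w = 0"
  shows "w \<in> tangent_space M x"
proof -
  define F' where "F' z = frechet_derivative F (at z)" for z
  have dF: "F differentiable (at z)" if "z \<in> U" for z
  proof -
    have "\<forall>x\<in>U. dirder [] F differentiable (at x)" using sm unfolding smooth_on_def by blast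
    then show ?thesis using that by simp
  qed
  have hF: "(F has_derivative F' z) (at z)" if "z \<in> U" for z
    using dF[OF that] unfolding F'_def by (simp add: frechet_derivative_works)
  have lF: "linear (F' z)" if "z \<in> U" for z
    using hF[OF that] by (rule has_derivative_linear)
  have cF: "continuous_on U (\<lambda>z. F' z v)" for v
  proof -
    have "continuous_on U (dirder [v] F)" using sm unfolding smooth_on_def by blast
    then show ?thesis unfolding F'_def by simp
  qed
  define L where "L = F' x"
  have lL: "linear L" unfolding L_def using lF U(2) .
  define K where "K = {k. L k = 0}"
  have sK: "subspace K" unfolding K_def using lL by (simp add: linear_subspace_kernel)
  obtain P where lP: "linear P" and PK: "\<And>h. P h \<in> K"
    and Port: "\<And>h k. k \<in> K \<Longrightarrow> (h - P h) \<bullet> k = 0" and Pid: "\<And>k. k \<in> K \<Longrightarrow> P k = k"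
    using orth_proj_exists[OF sK] by blast
  define La where "La = adjoint L"
  have lLa: "linear La" unfolding La_def using lL by (rule adjoint_linear)
  have adj: "k \<bullet> La u = L k \<bullet> u" for k u unfolding La_def using lL by (rule adjoint_works)
  have LaK: "k \<bullet> La u = 0" if "k \<in> K" for k u using that adj K_def by simp
  have blLa: "bounded_linear La" using lLa by (simp add: linear_conv_bounded_linear)
  have blP: "bounded_linear P" using lP by (simp add: linear_conv_bounded_linear)
  define D where "D z = (\<lambda>h. La (F' z h) + P h)" for z
  have blD: "bounded_linear (D z)" if "z \<in> U" for z
  proof -
    have "bounded_linear (F' z)" using lF[OF that] by (simp add: linear_conv_bounded_linear)
    then have "bounded_linear (\<lambda>h. La (F' z h))" by (rule bounded_linear_compose[OF blLa])
    then show ?thesis unfolding D_def using blP by (rule bounded_linear_add)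
  qed
  define \<Phi> where "\<Phi> z = La (F z) + P (z - x)" for z
  define \<Phi>' where "\<Phi>' z = Blinfun (D z)" for z
  have hPhi: "(\<Phi> has_derivative blinfun_apply (\<Phi>' z)) (at z)" if "z \<in> U" for z
  proof -
    have h1: "((\<lambda>z. La (F z)) has_derivative (\<lambda>h. La (F' z h))) (at z)"
      by (rule bounded_linear.has_derivative[OF blLa hF[OF that]])
    have "((\<lambda>z. z - x) has_derivative (\<lambda>h. h)) (at z)"
      by (auto intro!: derivative_eq_intros)
    then have h2: "((\<lambda>z. P (z - x)) has_derivative (\<lambda>h. P h)) (at z)"
      by (rule bounded_linear.has_derivative[OF blP])
    have "(\<Phi> has_derivative D z) (at z)"
      unfolding \<Phi>_def D_def by (rule has_derivative_add[OF h1 h2])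
    then show ?thesis unfolding \<Phi>'_def using blD[OF that] by (simp add: bounded_linear_Blinfun_apply)
  qed
  have cPhi: "continuous_on U \<Phi>'"
  proof (rule continuous_on_blinfun_componentwise)
    fix i :: 'a
    have "continuous_on U (\<lambda>z. La (F' z i) + P i)"
      by (intro continuous_on_add continuous_on_const
           linear_continuous_on_compose[OF cF lLa])
    moreover have "\<And>z. z \<in> U \<Longrightarrow> La (F' z i) + P i = blinfun_apply (\<Phi>' z) i"
      unfolding \<Phi>'_def using blD by (simp add: bounded_linear_Blinfun_apply D_def)
    ultimately show "continuous_on U (\<lambda>z. blinfun_apply (\<Phi>' z) i)"
      by (rule continuous_on_eq) simp
  qed
  have Dx: "D x = (\<lambda>h. La (L h) + P h)" unfolding D_def L_def by simp
  have lDx: "linear (D x)" using blD U(2) by (simp add: linear_conv_bounded_linear)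
  have injD: "inj (D x)"
  proof -
    have "h = 0" if h0: "La (L h) + P h = 0" for h
    proof -
      have "0 = h \<bullet> (La (L h) + P h)" using h0 by simp
      also have "\<dots> = L h \<bullet> L h + h \<bullet> P h" by (simp add: inner_add_right adj)
      also have "h \<bullet> P h = P h \<bullet> P h"
      proof -
        have "(h - P h) \<bullet> P h = 0" using Port PK by blast
        then show ?thesis by (simp only: inner_diff_left)
      qed
      finally have "L h \<bullet> L h + P h \<bullet> P h = 0" by simp
      then have "L h \<bullet> L h = 0 \<and> P h \<bullet> P h = 0"
        using add_nonneg_eq_0_iff[OF inner_ge_zero inner_ge_zero] by blast
      then have "L h = 0" "P h = 0" by simp_all
      then show "h = 0" using Pid[of h] K_def by simp
    qed
    then have "\<forall>h. D x h = 0 \<longrightarrow> h = 0" unfolding Dx by blast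
    then show ?thesis using linear_injective_0[OF lDx] by blast
  qed
  obtain Gi where lGi: "linear Gi" and Gi: "Gi \<circ> D x = id"
    using linear_injective_left_inverse[OF lDx injD] by blast
  define invf where "invf = Blinfun Gi"
  have invf: "invf o\<^sub>L \<Phi>' x = id_blinfun"
  proof (rule blinfun_eqI)
    fix i
    have "blinfun_apply invf = Gi" unfolding invf_def using lGi
      by (simp add: bounded_linear_Blinfun_apply linear_conv_bounded_linear)
    moreover have "blinfun_apply (\<Phi>' x) = D x" unfolding \<Phi>'_def using blD[OF U(2)]
      by (simp add: bounded_linear_Blinfun_apply)
    ultimately show "blinfun_apply (invf o\<^sub>L \<Phi>' x) i = blinfun_apply id_blinfun i"
      using Gi by (simp add: pointfree_idE)
  qed
  obtain U' V g g' where "open U'" "U' \<subseteq> U" "x \<in> U'" "open V" "\<Phi> x \<in> V"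
    and hom: "homeomorphism U' V \<Phi> g"
    and hg: "\<And>y. y \<in> V \<Longrightarrow> (g has_derivative (g' y)) (at y)"
    and g'eq: "\<And>y. y \<in> V \<Longrightarrow> g' y = inv (blinfun_apply (\<Phi>'(g y)))"
    and bij: "\<And>y. y \<in> V \<Longrightarrow> bij (blinfun_apply (\<Phi>'(g y)))"
    using inverse_function_theorem[OF U(1) hPhi cPhi U(2) invf] by blast
  have Fx: "F x = 0" using xM U(2) MU by blast
  have Phix: "\<Phi> x = 0" unfolding \<Phi>_def using Fx lLa lP by (simp add: linear_0)
  have gPhi: "\<Phi> (g y) = y" "g y \<in> U'" if "y \<in> V" for y
    using hom that unfolding homeomorphism_def by blast+
  have "g (\<Phi> x) = x" using hom \<open>x \<in> U'\<close> unfolding homeomorphism_def by blast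
  then have g0: "g 0 = x" using Phix by simp
  have "0 \<in> V" using \<open>\<Phi> x \<in> V\<close> Phix by simp
  then obtain e where e: "e > 0" "ball 0 e \<subseteq> V" using \<open>open V\<close> open_contains_ball by blast
  have wK: "w \<in> K" using w unfolding K_def L_def F'_def by simp
  have LaF0: "La (F (g y)) = 0" if "y \<in> V" "y \<in> K" for y
  proof -
    let ?a = "La (F (g y))"
    have "?a + P (g y - x) = y" using gPhi[OF that(1)] unfolding \<Phi>_def by simp
    then have "?a = y - P (g y - x)" by (simp add: algebra_simps)
    then have "?a \<in> K" using sK that(2) PK by (simp add: subspace_diff)
    then have "?a \<bullet> ?a = 0" using LaK by blast
    then show ?thesis by simp
  qed
  have injU': "u = 0" if "z \<in> U'" "u \<in> range (F' z)" "La u = 0" for z u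
  proof -
    have zU: "z \<in> U" using that(1) \<open>U' \<subseteq> U\<close> by blast
    have "\<Phi> z \<in> V" "g (\<Phi> z) = z" using hom that(1) unfolding homeomorphism_def by blast+
    then have "bij (blinfun_apply (\<Phi>' z))" using bij[of "\<Phi> z"] by simp
    moreover have "blinfun_apply (\<Phi>' z) = D z" unfolding \<Phi>'_def using blD[OF zU]
      by (simp add: bounded_linear_Blinfun_apply)
    ultimately have "inj (\<lambda>h. adjoint L (F' z h) + P h)" unfolding D_def La_def by (simp add: bij_is_inj)
    moreover have "dim (range (F' z)) = dim (range L)" using rk zU U(2) unfolding L_def F'_def by simp
    moreover have "\<And>h. L (P h) = 0" using PK unfolding K_def by blast
    moreover have "adjoint L u = 0" using that(3) unfolding La_def .
    ultimately show ?thesis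
      using inj_range_lemma[OF lF[OF zU] lL lP] that(2) by blast
  qed
  define d where "d = e / (norm w + 1)"
  have nw: "norm w + 1 > 0" using norm_ge_zero[of w] by linarith
  have d: "d > 0" unfolding d_def using e(1) nw by (rule divide_pos_pos)
  define I where "I = ball (0::real) d"
  have tV: "t *\<^sub>R w \<in> V" if "t \<in> I" for t
  proof -
    have "norm (t *\<^sub>R w) = \<bar>t\<bar> * norm w" by simp
    also have "\<dots> \<le> \<bar>t\<bar> * (norm w + 1)" by (simp add: mult_left_mono)
    also have "\<dots> < d * (norm w + 1)"
      using that nw unfolding I_def by (intro mult_strict_right_mono) (auto simp: dist_norm)
    also have "\<dots> = e" unfolding d_def using nw by simp
    finally show ?thesis using e(2) by (auto simp: dist_norm)
  qed
  have tK: "t *\<^sub>R w \<in> K" for t using wK sK by (simp add: subspace_scale)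
  have tU: "g (t *\<^sub>R w) \<in> U'" if "t \<in> I" for t using gPhi(2)[OF tV[OF that]] .
  have c0: "F (g (t *\<^sub>R w)) = 0" if "t \<in> I" for t
  proof -
    have cder: "((\<lambda>t. F (g (t *\<^sub>R w))) has_derivative (\<lambda>h. 0)) (at t within I)" if tI: "t \<in> I" for t
    proof -
      let ?z = "g (t *\<^sub>R w)"
      have zU: "?z \<in> U" using tU[OF tI] \<open>U' \<subseteq> U\<close> by blast
      have h1: "((\<lambda>t. t *\<^sub>R w) has_derivative (\<lambda>h. h *\<^sub>R w)) (at t)"
        by (auto intro!: derivative_eq_intros)
      have h2: "((\<lambda>t. g (t *\<^sub>R w)) has_derivative (\<lambda>h. g' (t *\<^sub>R w) (h *\<^sub>R w))) (at t)"
        using has_derivative_compose[OF h1 hg[OF tV[OF tI]]] .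
      define c' where "c' h = F' ?z (g' (t *\<^sub>R w) (h *\<^sub>R w))" for h
      have h3: "((\<lambda>t. F (g (t *\<^sub>R w))) has_derivative c') (at t)"
        unfolding c'_def using has_derivative_compose[OF h2 hF[OF zU]] .
      have h4: "((\<lambda>t. La (F (g (t *\<^sub>R w)))) has_derivative (\<lambda>h. La (c' h))) (at t)"
        by (rule bounded_linear.has_derivative[OF blLa h3])
      have h5: "((\<lambda>t. La (F (g (t *\<^sub>R w)))) has_derivative (\<lambda>h. 0)) (at t)"
      proof (rule has_derivative_transform_within_open[OF has_derivative_const[of 0] _ tI])
        show "open I" unfolding I_def by simp
        show "\<And>s. s \<in> I \<Longrightarrow> 0 = La (F (g (s *\<^sub>R w)))"
          using LaF0 tV tK by simp
      qed
      have "(\<lambda>h. La (c' h)) = (\<lambda>h. 0)" using has_derivative_unique[OF h4 h5] .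
      then have "c' h = 0" for h
        using injU'[OF tU[OF tI], of "c' h"] unfolding c'_def by (metis rangeI)
      then have "c' = (\<lambda>h. 0)" by blast
      then show ?thesis using h3 has_derivative_at_withinI by blast
    qed
    have "convex I" unfolding I_def by simp
    have "0 \<in> I" unfolding I_def using d by simp
    have "F (g (t *\<^sub>R w)) = F (g (0 *\<^sub>R w))"
      using has_derivative_zero_unique[OF \<open>convex I\<close> cder that \<open>0 \<in> I\<close>] .
    then show ?thesis using g0 Fx by simp
  qed
  define \<gamma> where "\<gamma> t = (if t \<in> I then g (t *\<^sub>R w) else x)" for t
  have gM: "\<gamma> t \<in> M" for t
  proof (cases "t \<in> I")
    case True
    then have "g (t *\<^sub>R w) \<in> U" using tU \<open>U' \<subseteq> U\<close> by blast
    then have "g (t *\<^sub>R w) \<in> M \<inter> U" using MU c0[OF True] by blast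
    then show ?thesis unfolding \<gamma>_def using True by simp
  next
    case False then show ?thesis unfolding \<gamma>_def using xM by simp
  qed
  have "0 \<in> I" unfolding I_def using d by simp
  have gam0: "\<gamma> 0 = x" unfolding \<gamma>_def using \<open>0 \<in> I\<close> g0 by simp
  have "0 \<in> V" using \<open>0 \<in> V\<close> .
  have g'0: "g' 0 = inv (D x)"
    using g'eq[OF \<open>0 \<in> V\<close>] g0 unfolding \<Phi>'_def using blD[OF U(2)]
    by (simp add: bounded_linear_Blinfun_apply)
  have bijD: "bij (D x)"
    using bij[OF \<open>0 \<in> V\<close>] g0 unfolding \<Phi>'_def using blD[OF U(2)]
    by (simp add: bounded_linear_Blinfun_apply)
  have Dw: "D x w = w" unfolding Dx using wK Pid[OF wK] lLa
    unfolding K_def by (simp add: linear_0)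
  have g'w: "g' 0 w = w" unfolding g'0 using bijD Dw by (metis bij_inv_eq_iff)
  have lg': "linear (g' 0)" using hg[OF \<open>0 \<in> V\<close>] by (rule has_derivative_linear)
  have h1: "((\<lambda>t. t *\<^sub>R w) has_derivative (\<lambda>h. h *\<^sub>R w)) (at 0)"
    by (auto intro!: derivative_eq_intros)
  have "((\<lambda>t. g (t *\<^sub>R w)) has_derivative (\<lambda>h. g' 0 (h *\<^sub>R w))) (at 0)"
    using has_derivative_compose[OF h1, of g "g' 0"] hg[OF \<open>0 \<in> V\<close>] by simp
  moreover have "(\<lambda>h. g' 0 (h *\<^sub>R w)) = (\<lambda>h. h *\<^sub>R w)"
    using lg' g'w by (simp add: linear_scale)
  ultimately have "((\<lambda>t. g (t *\<^sub>R w)) has_derivative (\<lambda>h. h *\<^sub>R w)) (at 0)" by simp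
  then have "(\<gamma> has_derivative (\<lambda>h. h *\<^sub>R w)) (at 0)"
  proof (rule has_derivative_transform_within_open[OF _ _ \<open>0 \<in> I\<close>])
    show "open I" unfolding I_def by simp
    show "\<And>s. s \<in> I \<Longrightarrow> g (s *\<^sub>R w) = \<gamma> s" unfolding \<gamma>_def by simp
  qed
  then have "(\<gamma> has_vector_derivative w) (at 0)" by (simp add: has_vector_derivative_def)
  then show ?thesis unfolding tangent_space_def using gM gam0 by blast
qed


lemma tangent_proj:
  fixes M :: "'a::euclidean_space set"
  assumes man: "closed_submanifold M" and xM: "x \<in> M"
  shows "\<exists>p\<in>tangent_space M x. \<forall>w\<in>tangent_space M x. p \<bullet> w = a \<bullet> w"
proof -
  obtain U and F :: "'a \<Rightarrow> 'a" and r where U: "open U" "x \<in> U" and sm: "smooth_on U F"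
    and rk: "\<forall>z\<in>U. dim (range (frechet_derivative F (at z))) = r"
    and MU: "M \<inter> U = {z\<in>U. F z = 0}"
  proof -
    have "\<forall>x\<in>M. \<exists>U (F::'a \<Rightarrow> 'a) r. open U \<and> x \<in> U \<and> smooth_on U F \<and>
        (\<forall>z\<in>U. dim (range (frechet_derivative F (at z))) = r) \<and>
        M \<inter> U = {z\<in>U. F z = 0}"
      using man unfolding closed_submanifold_def by blast
    then have "\<exists>U (F::'a \<Rightarrow> 'a) r. open U \<and> x \<in> U \<and> smooth_on U F \<and>
        (\<forall>z\<in>U. dim (range (frechet_derivative F (at z))) = r) \<and>
        M \<inter> U = {z\<in>U. F z = 0}" using xM by (rule bspec)
    then show thesis using that by blast
  qed
  have "\<forall>x\<in>U. dirder [] F differentiable (at x)" using sm unfolding smooth_on_def by blast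
  then have dF: "F differentiable (at x)" using U(2) by simp
  define L where "L = frechet_derivative F (at x)"
  have "(F has_derivative L) (at x)" unfolding L_def using dF by (rule frechet_derivative_works[THEN iffD1])
  then have lL: "linear L" by (rule has_derivative_linear)
  define K where "K = {k. L k = 0}"
  have sK: "subspace K" unfolding K_def using lL by (simp add: linear_subspace_kernel)
  obtain P where lP: "linear P" and PK: "\<And>h. P h \<in> K"
    and Port: "\<And>h k. k \<in> K \<Longrightarrow> (h - P h) \<bullet> k = 0" and "\<And>k. k \<in> K \<Longrightarrow> P k = k"
    using orth_proj_exists[OF sK] by blast
  have T1: "w \<in> K" if "w \<in> tangent_space M x" for w
    using tangent_sub_ker[OF U MU dF that] unfolding K_def L_def by blast
  have T2: "w \<in> tangent_space M x" if "w \<in> K" for w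
    using ker_sub_tangent[OF U xM MU sm rk] that unfolding K_def L_def by blast
  have c1: "P a \<in> tangent_space M x" using T2 PK by blast
  have c2: "P a \<bullet> w = a \<bullet> w" if "w \<in> tangent_space M x" for w
  proof -
    have "(a - P a) \<bullet> w = 0" using Port T1 that by blast
    then show ?thesis by (simp add: inner_diff_left)
  qed
  show ?thesis using c1 c2 by blast
qed



lemma pos2_bound:
  fixes x h :: real
  shows "\<bar>(max 0 (x + h))^2 - (max 0 x)^2 - 2 * max 0 x * h\<bar> \<le> 3 * h^2"
proof (cases "x \<ge> 0")
  case True
  show ?thesis
  proof (cases "x + h \<ge> 0")
    case True2: True
    have "(max 0 (x + h))^2 - (max 0 x)^2 - 2 * max 0 x * h = h^2"
      using True True2 by (simp add: power2_eq_square algebra_simps)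
    then show ?thesis by simp
  next
    case False
    have a: "x \<le> - h" using False by simp
    have b: "h < 0" using False True by simp
    have e: "(max 0 (x + h))^2 - (max 0 x)^2 - 2 * max 0 x * h = - (x * (x + 2 * h))"
      using False True by (simp add: power2_eq_square algebra_simps)
    have n1: "0 \<le> x * (-(x + 2 * h))" using True a b by (intro mult_nonneg_nonneg) auto
    have n2: "x * (-(x + 2 * h)) \<le> (-h) * (-2 * h)" using True a b by (intro mult_mono) auto
    have eq: "- (x * (x + 2 * h)) = x * (-(x + 2 * h))" by (simp add: algebra_simps)
    have "\<bar>- (x * (x + 2 * h))\<bar> = x * (-(x + 2 * h))" by (subst eq) (rule abs_of_nonneg[OF n1])
    also have "\<dots> \<le> 2 * h^2" using n2 by (simp add: power2_eq_square)
    finally show ?thesis using e by (simp add: power2_eq_square)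
  qed
next
  case False
  then have m: "max 0 x = 0" by simp
  show ?thesis
  proof (cases "x + h \<ge> 0")
    case True
    then have "0 \<le> x + h" "x + h \<le> h" using False by simp_all
    then have "(x + h)^2 \<le> h^2" by (simp add: power_mono)
    moreover have "0 \<le> h^2" by simp
    ultimately have "(x + h)^2 \<le> 3 * h^2" by linarith
    then show ?thesis using m True by simp
  next
    case False
    then show ?thesis using m by simp
  qed
qed

lemma pos2_deriv: "((\<lambda>x::real. (max 0 x)^2) has_real_derivative 2 * max 0 x) (at x)"
proof -
  have "((\<lambda>h. ((max 0 (x + h))^2 - (max 0 x)^2) / h - 2 * max 0 x) \<longlongrightarrow> 0) (at 0)"
  proof (rule Lim_null_comparison)
    show "eventually (\<lambda>h. norm (((max 0 (x + h))^2 - (max 0 x)^2) / h - 2 * max 0 x) \<le> 3 * \<bar>h\<bar>) (at (0::real))"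
    proof (rule eventually_at_topological[THEN iffD2], intro exI conjI ballI impI)
      show "open (UNIV::real set)" by simp
      show "(0::real) \<in> UNIV" by simp
      fix h :: real assume "h \<noteq> 0"
      have "((max 0 (x + h))^2 - (max 0 x)^2) / h - 2 * max 0 x
          = ((max 0 (x + h))^2 - (max 0 x)^2 - 2 * max 0 x * h) / h"
        using \<open>h \<noteq> 0\<close> by (simp add: field_simps)
      also have "norm \<dots> = \<bar>(max 0 (x + h))^2 - (max 0 x)^2 - 2 * max 0 x * h\<bar> / \<bar>h\<bar>"
        by (simp add: abs_divide)
      also have "\<dots> \<le> 3 * h^2 / \<bar>h\<bar>"
        using pos2_bound[of x h] by (simp add: divide_right_mono)
      also have "\<dots> = 3 * \<bar>h\<bar>"
        using \<open>h \<noteq> 0\<close> by (cases "h > 0") (auto simp: power2_eq_square field_simps)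
      finally show "norm (((max 0 (x + h))^2 - (max 0 x)^2) / h - 2 * max 0 x) \<le> 3 * \<bar>h\<bar>" .
    qed
    show "((\<lambda>h::real. 3 * \<bar>h\<bar>) \<longlongrightarrow> 0) (at 0)"
      by (auto intro!: tendsto_eq_intros)
  qed
  then have "((\<lambda>h. ((max 0 (x + h))^2 - (max 0 x)^2) / h) \<longlongrightarrow> 2 * max 0 x) (at 0)"
    by (simp add: LIM_zero_iff)
  then show ?thesis by (simp add: DERIV_def)
qed


lemma lsc_attains_min:
  fixes f :: "'b::topological_space \<Rightarrow> ereal"
  assumes cQ: "compact Q" and ne: "Q \<noteq> {}"
    and lsc: "\<And>q c. q \<in> Q \<Longrightarrow> ereal c < f q \<Longrightarrow> eventually (\<lambda>z. ereal c < f z) (at q within Q)"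
  shows "\<exists>q\<in>Q. \<forall>z\<in>Q. f q \<le> f z"
proof (rule ccontr)
  assume "\<not> ?thesis"
  then have "\<forall>q\<in>Q. \<exists>q'\<in>Q. f q' < f q" by (auto simp: not_le)
  then have "\<forall>q\<in>Q. \<exists>r. fst r \<in> Q \<and> f (fst r) < ereal (snd r) \<and> ereal (snd r) < f q"
  proof (intro ballI)
    fix q assume "q \<in> Q" and "\<forall>q\<in>Q. \<exists>q'\<in>Q. f q' < f q"
    then obtain q' where q': "q' \<in> Q" "f q' < f q" by blast
    obtain b where "f q' < ereal b" "ereal b < f q" using ereal_dense2[OF q'(2)] by blast
    then show "\<exists>r. fst r \<in> Q \<and> f (fst r) < ereal (snd r) \<and> ereal (snd r) < f q"
      using q'(1) by (intro exI[of _ "(q', b)"]) simp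
  qed
  from bchoice[OF this] obtain R where R0: "\<forall>q\<in>Q. fst (R q) \<in> Q \<and> f (fst (R q)) < ereal (snd (R q)) \<and> ereal (snd (R q)) < f q"
    by blast
  then have R: "\<And>q. q \<in> Q \<Longrightarrow> fst (R q) \<in> Q \<and> f (fst (R q)) < ereal (snd (R q)) \<and> ereal (snd (R q)) < f q"
    by blast
  have "\<forall>q\<in>Q. \<exists>Op. open Op \<and> q \<in> Op \<and> (\<forall>z\<in>Op. z \<in> Q \<longrightarrow> ereal (snd (R q)) < f z)"
  proof
    fix q assume q: "q \<in> Q"
    have "eventually (\<lambda>z. ereal (snd (R q)) < f z) (at q within Q)" using lsc q R by blast
    then obtain Op where Op: "open Op" "q \<in> Op" "\<And>z. z \<in> Op \<Longrightarrow> z \<noteq> q \<Longrightarrow> z \<in> Q \<Longrightarrow> ereal (snd (R q)) < f z"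
      unfolding eventually_at_topological by blast
    have "\<forall>z\<in>Op. z \<in> Q \<longrightarrow> ereal (snd (R q)) < f z"
    proof (intro ballI impI)
      fix z assume "z \<in> Op" "z \<in> Q"
      show "ereal (snd (R q)) < f z"
      proof (cases "z = q")
        case True then show ?thesis using R q by blast
      next
        case False then show ?thesis using Op(3) \<open>z \<in> Op\<close> \<open>z \<in> Q\<close> by blast
      qed
    qed
    then show "\<exists>Op. open Op \<and> q \<in> Op \<and> (\<forall>z\<in>Op. z \<in> Q \<longrightarrow> ereal (snd (R q)) < f z)"
      using Op(1,2) by blast
  qed
  from bchoice[OF this] obtain Op where Op0: "\<forall>q\<in>Q. open (Op q) \<and> q \<in> Op q \<and> (\<forall>z\<in>Op q. z \<in> Q \<longrightarrow> ereal (snd (R q)) < f z)"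
    by blast
  then have Op: "\<And>q. q \<in> Q \<Longrightarrow> open (Op q) \<and> q \<in> Op q \<and> (\<forall>z\<in>Op q. z \<in> Q \<longrightarrow> ereal (snd (R q)) < f z)"
    by blast
  have cov: "Q \<subseteq> (\<Union>q\<in>Q. Op q)"
  proof
    fix q assume q: "q \<in> Q"
    then have "q \<in> Op q" using Op by blast
    then show "q \<in> (\<Union>q\<in>Q. Op q)" using q by blast
  qed
  have opn: "\<And>T. T \<in> Q \<Longrightarrow> open (Op T)" using Op by blast
  obtain C' where C': "C' \<subseteq> Q" "finite C'" "Q \<subseteq> (\<Union>q\<in>C'. Op q)"
    by (rule compactE_image[OF cQ opn cov])
  have "C' \<noteq> {}"
  proof
    assume "C' = {}"
    then have "Q \<subseteq> {}" using C'(3) by simp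
    then show False using ne by simp
  qed
  define j where "j = arg_min_on (\<lambda>i. f (fst (R i))) C'"
  have jC: "j \<in> C'" and jmin: "\<not>(\<exists>i\<in>C'. f (fst (R i)) < f (fst (R j)))"
    using arg_min_if_finite[OF C'(2) \<open>C' \<noteq> {}\<close>, of "\<lambda>i. f (fst (R i))"] unfolding j_def by simp_all
  have "j \<in> Q" using jC C'(1) by blast
  then have "fst (R j) \<in> Q" using R by blast
  then have "fst (R j) \<in> (\<Union>q\<in>C'. Op q)" using C'(3) by blast
  then obtain i where i: "i \<in> C'" "fst (R j) \<in> Op i" by blast
  have "i \<in> Q" using i(1) C'(1) by blast
  then have "\<forall>z\<in>Op i. z \<in> Q \<longrightarrow> ereal (snd (R i)) < f z" using Op by blast
  then have "ereal (snd (R i)) < f (fst (R j))" using i(2) \<open>fst (R j) \<in> Q\<close> by blast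
  moreover have "f (fst (R j)) \<le> f (fst (R i))" using jmin i(1) not_less by blast
  moreover have "f (fst (R i)) < ereal (snd (R i))" using R \<open>i \<in> Q\<close> by blast
  ultimately have "ereal (snd (R i)) < ereal (snd (R i))" by (meson less_le_trans less_trans)
  then show False by simp
qed

lemma lsc_minus_cont:
  fixes v :: "'b::metric_space \<Rightarrow> ereal"
  assumes lsc: "lsc_on S v" and cphi: "continuous_on Q \<phi>" and QS: "Q \<subseteq> S"
    and q: "q \<in> Q" and c: "ereal c < v q - ereal (\<phi> q)"
  shows "eventually (\<lambda>z. ereal c < v z - ereal (\<phi> z)) (at q within Q)"
proof -
  have a: "ereal (c + \<phi> q) < v q" using c by (cases "v q") auto
  obtain b where b: "ereal (c + \<phi> q) < ereal b" "ereal b < v q" using ereal_dense2[OF a] by blast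
  have "eventually (\<lambda>z. ereal b < v z) (at q within S)"
    using lsc q QS b(2) unfolding lsc_on_def by blast
  then have e1: "eventually (\<lambda>z. ereal b < v z) (at q within Q)"
    by (rule filter_leD[OF at_le[OF QS]])
  have "(\<phi> \<longlongrightarrow> \<phi> q) (at q within Q)"
    using cphi q by (simp add: continuous_on_def)
  moreover have "\<phi> q < b - c" using b(1) by simp
  ultimately have e2: "eventually (\<lambda>z. \<phi> z < b - c) (at q within Q)"
    by (rule order_tendstoD)
  show ?thesis
  proof (rule eventually_mono[OF eventually_conj[OF e1 e2]])
    fix z assume z: "ereal b < v z \<and> \<phi> z < b - c"
    then show "ereal c < v z - ereal (\<phi> z)" by (cases "v z") auto
  qed
qed



lemma partb:
  fixes M :: "'a::euclidean_space set" and H :: "'a \<Rightarrow> 'a \<Rightarrow> real \<Rightarrow> real"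
    and \<Lambda> C\<^sub>0 C\<^sub>1 :: real and T :: ereal and v :: "'a \<times> real \<Rightarrow> ereal" and y :: 'a
  assumes man: "closed_submanifold M"
    and Lpos: "\<Lambda> > 0"
    and H4: "\<And>x p u w. x \<in> M \<Longrightarrow> p \<in> tangent_space M x \<Longrightarrow> \<bar>H x p u - H x p w\<bar> \<le> \<Lambda> * \<bar>u - w\<bar>"
    and lsc: "lsc_on (M \<times> {t. 0 \<le> t \<and> ereal t < T}) v"
    and sub: "BJ_subsol M H T v"
    and C0pos: "C\<^sub>0 > 0" and C1pos: "C\<^sub>1 > 0"
    and HC0: "\<And>x p. x \<in> M \<Longrightarrow> p \<in> tangent_space M x \<Longrightarrow> H x p 0 \<ge> - C\<^sub>0"
    and vC1: "\<And>x t. x \<in> M \<Longrightarrow> 0 \<le> t \<Longrightarrow> ereal t < T \<Longrightarrow> v (x, t) \<ge> ereal (- C\<^sub>1)"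
    and yM: "y \<in> M"
    and s: "0 < s" "s < t" "ereal t < T" and ws: "v (y, s) = ereal ws"
  shows "v (y, t) \<le> ereal ((ws + (C\<^sub>0 / \<Lambda> + 2 * C\<^sub>1)) * exp (\<Lambda> * (t - s)) - (C\<^sub>0 / \<Lambda> + 2 * C\<^sub>1))"
proof (rule ccontr)
  define C where "C = C\<^sub>0 / \<Lambda> + 2 * C\<^sub>1"
  assume nle: "\<not> ?thesis"
  then have nle': "ereal ((ws + C) * exp (\<Lambda> * (t - s)) - C) < v (y, t)" unfolding C_def by simp
  have C0L: "C\<^sub>0 / \<Lambda> > 0" using C0pos Lpos by simp
  have CC1: "C > C\<^sub>1" unfolding C_def using C0L C1pos by simp
  have LC: "\<Lambda> * C = C\<^sub>0 + 2 * \<Lambda> * C\<^sub>1" unfolding C_def using Lpos by (simp add: field_simps)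
  have sT: "ereal s < T" using s(2) s(3) by (meson ereal_less_eq(3) less_imp_le le_less_trans)
  have ws1: "ws \<ge> - C\<^sub>1" using vC1[OF yM, of s] s(1) sT ws by simp
  define A where "A = ws + C"
  have Apos: "A > 0" unfolding A_def using ws1 CC1 by simp
  define B0 where "B0 = A * exp (\<Lambda> * (t - s)) - C"
  obtain c where c1: "B0 < c" and c2: "ereal c < v (y, t)"
  proof -
    obtain z where "ereal B0 < ereal z" "ereal z < v (y, t)"
      using ereal_dense2[OF nle'] unfolding B0_def A_def by blast
    then show thesis using that by simp
  qed
  define S0 where "S0 = M \<times> {t. 0 \<le> t \<and> ereal t < T}"
  have ytS0: "(y, t) \<in> S0" unfolding S0_def using yM s by simp
  have "eventually (\<lambda>q. ereal c < v q) (at (y, t) within S0)"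
    using lsc ytS0 c2 unfolding lsc_on_def S0_def by blast
  then obtain \<delta> where \<delta>: "\<delta> > 0"
    and \<delta>2: "\<And>q. q \<in> S0 \<Longrightarrow> q \<noteq> (y, t) \<Longrightarrow> dist q (y, t) < \<delta> \<Longrightarrow> ereal c < v q"
    unfolding eventually_at by blast
  have near: "ereal c < v (z, \<tau>)"
    if "z \<in> M" "0 \<le> \<tau>" "ereal \<tau> < T" "norm (z - y) < \<delta>/2" "\<bar>\<tau> - t\<bar> < \<delta>/2" for z \<tau>
  proof (cases "(z, \<tau>) = (y, t)")
    case True then show ?thesis using c2 by simp
  next
    case False
    have "dist (z, \<tau>) (y, t) = sqrt ((dist z y)^2 + (dist \<tau> t)^2)" by (rule dist_Pair_Pair)
    also have "\<dots> \<le> \<bar>dist z y\<bar> + \<bar>dist \<tau> t\<bar>" by (rule sqrt_sum_squares_le_sum_abs)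
    also have "\<dots> < \<delta>" using that(4,5) by (simp add: dist_norm dist_real_def)
    finally have "dist (z, \<tau>) (y, t) < \<delta>" .
    moreover have "(z, \<tau>) \<in> S0" unfolding S0_def using that(1-3) by simp
    ultimately show ?thesis using \<delta>2 False by blast
  qed
  define q where "q = (c + C) / A"
  have cC: "c + C > A * exp (\<Lambda> * (t - s))" using c1 unfolding B0_def by simp
  have q1: "q > exp (\<Lambda> * (t - s))" unfolding q_def using cC Apos by (simp add: field_simps)
  have qpos: "q > 0" using q1 by (meson exp_gt_zero less_trans)
  define dd where "dd = ln q - \<Lambda> * (t - s)"
  have dd: "dd > 0"
  proof -
    have "exp (\<Lambda> * (t - s)) < exp (ln q)" using q1 qpos by simp
    then have "\<Lambda> * (t - s) < ln q" by simp
    then show ?thesis unfolding dd_def by simp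
  qed
  define \<eta> where "\<eta> = min (\<delta>/4) (dd/(4*\<Lambda>))"
  have \<eta>pos: "\<eta> > 0" unfolding \<eta>_def using \<delta> dd Lpos by simp
  have \<eta>\<delta>: "\<eta> \<le> \<delta>/4" unfolding \<eta>_def by simp
  have \<eta>L: "\<Lambda> * \<eta> \<le> dd/4"
  proof -
    have "\<eta> \<le> dd/(4*\<Lambda>)" unfolding \<eta>_def by simp
    then have "\<Lambda> * \<eta> \<le> \<Lambda> * (dd/(4*\<Lambda>))" using Lpos by (intro mult_left_mono) simp_all
    also have "\<dots> = dd/4" using Lpos by simp
    finally show ?thesis .
  qed
  define mu where "mu = (\<Lambda> * (t - s) + dd/2) / (t - s + \<eta>)"
  have ts\<eta>: "t - s + \<eta> > 0" using s \<eta>pos by simp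
  have lam_eq: "mu * (t + \<eta> - s) = \<Lambda> * (t - s) + dd/2"
    unfolding mu_def using ts\<eta> by (simp add: field_simps)
  have lamL: "mu > \<Lambda>"
  proof -
    have "\<Lambda> * (t - s + \<eta>) < \<Lambda> * (t - s) + dd/2" using \<eta>L dd by (simp add: algebra_simps)
    then show ?thesis unfolding mu_def using ts\<eta> by (simp add: field_simps)
  qed
  have lampos: "mu > 0" using lamL Lpos by simp
  define E where "E \<tau> = exp (mu * (\<tau> - s))" for \<tau>
  have Epos: "E \<tau> > 0" for \<tau> unfolding E_def by simp
  have Emono: "E \<tau>1 \<le> E \<tau>2" if "\<tau>1 \<le> \<tau>2" for \<tau>1 \<tau>2
    unfolding E_def using that lampos by (simp add: mult_left_mono)
  have Es: "E s = 1" unfolding E_def by simp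
  have gt\<eta>: "A * E (t + \<eta>) - C < c"
  proof -
    have "E (t + \<eta>) = exp (\<Lambda> * (t - s) + dd/2)" unfolding E_def using lam_eq by simp
    also have "\<dots> < exp (ln q)"
    proof -
      have e: "\<Lambda> * (t - s) + dd = ln q" unfolding dd_def by simp
      have "\<Lambda> * (t - s) + dd/2 < ln q" using dd e by linarith
      then show ?thesis by simp
    qed
    also have "\<dots> = q" using qpos by simp
    finally have "A * E (t + \<eta>) < A * q" using Apos by simp
    also have "A * q = c + C" unfolding q_def using Apos by simp
    finally show ?thesis by simp
  qed
  define Ksp where "Ksp = 4 * (C\<^sub>1 + \<bar>c\<bar> + 1) / \<delta>^2"
  define K2 where "K2 = A / \<eta>^2"
  define K1 where "K1 = 4 * (A + C\<^sub>1 + 1) / s^2"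
  have Ksp: "Ksp > 0" unfolding Ksp_def using \<delta> C1pos by simp
  have K2: "K2 > 0" unfolding K2_def using Apos \<eta>pos by simp
  have K1: "K1 > 0" unfolding K1_def using Apos C1pos s by simp
  define pp where "pp r = (max 0 r)^2" for r :: real
  have ppnn: "pp r \<ge> 0" for r unfolding pp_def by simp
  define \<theta> where "\<theta> \<tau> = (A - K2 * pp (\<tau> - t)) * E \<tau> - C - K1 * pp (s - \<tau>)" for \<tau>
  define \<theta>' where "\<theta>' \<tau> = (A - K2 * pp (\<tau> - t)) * (mu * E \<tau>) - K2 * (2 * max 0 (\<tau> - t)) * E \<tau>
      + K1 * (2 * max 0 (s - \<tau>))" for \<tau>
  have dpp1: "((\<lambda>\<tau>. pp (\<tau> - t)) has_real_derivative 2 * max 0 (\<tau> - t)) (at \<tau>)" for \<tau>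
  proof -
    have "((\<lambda>\<tau>. \<tau> - t) has_real_derivative 1) (at \<tau>)" by (auto intro!: derivative_eq_intros)
    from DERIV_chain2[OF pos2_deriv this] show ?thesis unfolding pp_def by simp
  qed
  have dpp2: "((\<lambda>\<tau>. pp (s - \<tau>)) has_real_derivative - (2 * max 0 (s - \<tau>))) (at \<tau>)" for \<tau>
  proof -
    have "((\<lambda>\<tau>. s - \<tau>) has_real_derivative -1) (at \<tau>)" by (auto intro!: derivative_eq_intros)
    from DERIV_chain2[OF pos2_deriv this] show ?thesis unfolding pp_def by simp
  qed
  have dE: "(E has_real_derivative mu * E \<tau>) (at \<tau>)" for \<tau>
    unfolding E_def by (auto intro!: derivative_eq_intros)
  have d\<theta>: "(\<theta> has_real_derivative \<theta>' \<tau>) (at \<tau>)" for \<tau>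
  proof -
    have "((\<lambda>\<tau>. A - K2 * pp (\<tau> - t)) has_real_derivative 0 - K2 * (2 * max 0 (\<tau> - t))) (at \<tau>)"
      by (intro DERIV_diff DERIV_const DERIV_cmult dpp1)
    from DERIV_mult[OF this dE] have a: "((\<lambda>\<tau>. (A - K2 * pp (\<tau> - t)) * E \<tau>) has_real_derivative
        (0 - K2 * (2 * max 0 (\<tau> - t))) * E \<tau> + mu * E \<tau> * (A - K2 * pp (\<tau> - t))) (at \<tau>)" .
    have b: "((\<lambda>\<tau>. K1 * pp (s - \<tau>)) has_real_derivative K1 * - (2 * max 0 (s - \<tau>))) (at \<tau>)"
      by (intro DERIV_cmult dpp2)
    have "(\<theta> has_real_derivative ((0 - K2 * (2 * max 0 (\<tau> - t))) * E \<tau> + mu * E \<tau> * (A - K2 * pp (\<tau> - t))) - 0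
        - K1 * - (2 * max 0 (s - \<tau>))) (at \<tau>)"
      unfolding \<theta>_def by (intro DERIV_diff a b DERIV_const)
    then show ?thesis unfolding \<theta>'_def by (simp add: algebra_simps)
  qed
  have c\<theta>': "continuous_on UNIV \<theta>'"
    unfolding \<theta>'_def pp_def E_def by (intro continuous_intros)
  define h where "h z = Ksp * ((z - y) \<bullet> (z - y))" for z
  have hnn: "h z \<ge> 0" for z unfolding h_def using Ksp by simp
  define \<phi> where "\<phi> qq = \<theta> (snd qq) - h (fst qq)" for qq :: "'a \<times> real"
  define D\<phi> where "D\<phi> qq = (\<lambda>d::'a \<times> real. \<theta>' (snd qq) * snd d - 2 * Ksp * ((fst qq - y) \<bullet> fst d))" for qq :: "'a \<times> real"
  define \<phi>' where "\<phi>' qq = Blinfun (D\<phi> qq)" for qq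
  have h\<phi>: "(\<phi> has_derivative D\<phi> qq) (at qq)" for qq
  proof -
    have s1: "(snd has_derivative snd) (at qq)"
      by (rule bounded_linear_imp_has_derivative[OF bounded_linear_snd])
    have t1: "((\<lambda>qq. \<theta> (snd qq)) has_derivative (\<lambda>d. \<theta>' (snd qq) * snd d)) (at qq)"
      using has_derivative_compose[OF s1 d\<theta>[of "snd qq", unfolded has_field_derivative_def]] by simp
    have h1: "((\<lambda>qq. h (fst qq)) has_derivative (\<lambda>d. 2 * Ksp * ((fst qq - y) \<bullet> fst d))) (at qq)"
      unfolding h_def by (auto intro!: derivative_eq_intros simp: inner_commute algebra_simps)
    show ?thesis unfolding \<phi>_def D\<phi>_def using has_derivative_diff[OF t1 h1] .
  qed
  have blD: "bounded_linear (D\<phi> qq)" for qq using h\<phi>[of qq] by (rule has_derivative_bounded_linear)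
  have \<phi>'ap: "blinfun_apply (\<phi>' qq) = D\<phi> qq" for qq
    unfolding \<phi>'_def using blD by (simp add: bounded_linear_Blinfun_apply)
  have c\<theta>s: "continuous_on UNIV (\<lambda>qq::'a \<times> real. \<theta>' (snd qq))"
    using continuous_on_compose2[OF c\<theta>' continuous_on_snd[OF continuous_on_id]] by simp
  have c\<phi>': "continuous_on UNIV \<phi>'"
  proof (rule continuous_on_blinfun_componentwise)
    fix i :: "'a \<times> real"
    have "continuous_on UNIV (\<lambda>qq. \<theta>' (snd qq) * snd i - 2 * Ksp * ((fst qq - y) \<bullet> fst i))"
      by (intro continuous_intros c\<theta>s)
    then show "continuous_on UNIV (\<lambda>qq. blinfun_apply (\<phi>' qq) i)"
      by (simp add: \<phi>'ap D\<phi>_def)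
  qed
  have C1t: "C1_test M T \<phi> \<phi>'"
    unfolding C1_test_def
  proof (intro exI[of _ UNIV] conjI ballI)
    show "open (UNIV :: ('a \<times> real) set)" by simp
    show "stdom M T \<subseteq> UNIV" by simp
    fix z :: "'a \<times> real"
    show "(\<phi> has_derivative blinfun_apply (\<phi>' z)) (at z)" using h\<phi> \<phi>'ap by simp
  next
    show "continuous_on UNIV \<phi>'" by (rule c\<phi>')
  qed
  have c\<phi>: "continuous_on UNIV \<phi>"
    by (rule continuous_at_imp_continuous_on) (use h\<phi> has_derivative_continuous in blast)
  have cM: "compact M" using man unfolding closed_submanifold_def by blast
  define Q where "Q = M \<times> {s/2..t}"
  have cQ: "compact Q" unfolding Q_def using cM by (intro compact_Times compact_Icc)
  have QS0: "Q \<subseteq> S0" unfolding Q_def S0_def using s sT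
    by (auto intro: le_less_trans[OF ereal_less_eq(3)[THEN iffD2]])
  define \<Psi> where "\<Psi> qq = v qq - ereal (\<phi> qq)" for qq
  have ysQ: "(y, s) \<in> Q" unfolding Q_def using yM s by simp
  have lscQ: "eventually (\<lambda>z. ereal cc < \<Psi> z) (at qq within Q)" if "qq \<in> Q" "ereal cc < \<Psi> qq" for qq cc
    unfolding \<Psi>_def
    by (rule lsc_minus_cont[OF lsc[folded S0_def] continuous_on_subset[OF c\<phi> subset_UNIV] QS0 that[unfolded \<Psi>_def]])
  obtain qs where qsQ: "qs \<in> Q" and qsmin: "\<And>z. z \<in> Q \<Longrightarrow> \<Psi> qs \<le> \<Psi> z"
    using lsc_attains_min[OF cQ _ lscQ] ysQ by blast
  have pp0: "pp r = 0" if "r \<le> 0" for r unfolding pp_def using that by simp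
  have \<theta>s: "\<theta> s = A - C" unfolding \<theta>_def using pp0[of "s - t"] pp0[of 0] s(2) Es by simp
  have \<Psi>ys: "\<Psi> (y, s) = 0" unfolding \<Psi>_def \<phi>_def h_def using ws \<theta>s by (simp add: A_def)
  have \<Psi>qs: "\<Psi> qs \<le> 0" using qsmin[OF ysQ] \<Psi>ys by simp
  have \<theta>le: "\<theta> \<tau> \<le> A * E \<tau> - C - K1 * pp (s - \<tau>)" for \<tau>
  proof -
    have "K2 * pp (\<tau> - t) * E \<tau> \<ge> 0"
      using K2 ppnn[of "\<tau> - t"] Epos[of \<tau>] by (intro mult_nonneg_nonneg) simp_all
    then show ?thesis unfolding \<theta>_def by (simp add: algebra_simps)
  qed
  have outpos: "ereal (\<phi> (z, \<tau>)) < v (z, \<tau>)"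
    if z: "z \<in> M" "0 \<le> \<tau>" "ereal \<tau> < T" and \<tau>r: "\<tau> < s/2 \<or> t \<le> \<tau>" for z \<tau>
  proof -
    have vlow: "ereal (- C\<^sub>1) \<le> v (z, \<tau>)" using vC1 z by blast
    have \<phi>le: "\<phi> (z, \<tau>) \<le> \<theta> \<tau>" unfolding \<phi>_def using hnn[of z] by simp
    consider (a) "\<tau> < s/2" | (b) "t + \<eta> \<le> \<tau>" | (c) "t \<le> \<tau>" "\<tau> < t + \<eta>" using \<tau>r by linarith
    then show ?thesis
    proof cases
      case a
      have "E \<tau> \<le> E s" using a s(1) by (intro Emono) simp
      then have AE: "A * E \<tau> \<le> A" using Apos Es by simp
      have "(s/2)^2 \<le> (s - \<tau>)^2" using a s(1) by (intro power_mono) simp_all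
      then have "(s/2)^2 \<le> pp (s - \<tau>)" unfolding pp_def using a s(1) by simp
      then have "K1 * (s/2)^2 \<le> K1 * pp (s - \<tau>)" using K1 by (intro mult_left_mono) simp_all
      moreover have "K1 * (s/2)^2 = A + C\<^sub>1 + 1" unfolding K1_def using s(1) by (simp add: power2_eq_square)
      ultimately have "\<theta> \<tau> \<le> A - C - (A + C\<^sub>1 + 1)" using \<theta>le[of \<tau>] AE by linarith
      then have "\<phi> (z, \<tau>) < - C\<^sub>1" using \<phi>le CC1 C1pos by linarith
      then show ?thesis using vlow by (meson ereal_less_eq(3) less_le_trans ereal_less(2) less_ereal.simps(1))
    next
      case b
      have "\<eta>^2 \<le> (\<tau> - t)^2" using b \<eta>pos by (intro power_mono) simp_all
      then have "\<eta>^2 \<le> pp (\<tau> - t)" unfolding pp_def using b \<eta>pos by simp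
      then have "K2 * \<eta>^2 \<le> K2 * pp (\<tau> - t)" using K2 by (intro mult_left_mono) simp_all
      moreover have "K2 * \<eta>^2 = A" unfolding K2_def using \<eta>pos by simp
      ultimately have "A - K2 * pp (\<tau> - t) \<le> 0" by simp
      then have "(A - K2 * pp (\<tau> - t)) * E \<tau> \<le> 0" using Epos[of \<tau>] by (simp add: mult_nonpos_nonneg)
      moreover have "K1 * pp (s - \<tau>) \<ge> 0" using K1 ppnn by simp
      ultimately have "\<theta> \<tau> \<le> - C" unfolding \<theta>_def by simp
      then have "\<phi> (z, \<tau>) < - C\<^sub>1" using \<phi>le CC1 by linarith
      then show ?thesis using vlow by (meson ereal_less_eq(3) less_le_trans ereal_less(2) less_ereal.simps(1))
    next
      case c
      have "E \<tau> \<le> E (t + \<eta>)" using c by (intro Emono) simp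
      then have "A * E \<tau> \<le> A * E (t + \<eta>)" using Apos by simp
      moreover have "K1 * pp (s - \<tau>) \<ge> 0" using K1 ppnn by simp
      ultimately have \<theta>c: "\<theta> \<tau> < c" using \<theta>le[of \<tau>] gt\<eta> by linarith
      show ?thesis
      proof (cases "norm (z - y) < \<delta>/2")
        case True
        have "\<bar>\<tau> - t\<bar> < \<delta>/2" using c \<eta>\<delta> \<delta> by simp
        then have "ereal c < v (z, \<tau>)" using near[OF z True] by simp
        moreover have "\<phi> (z, \<tau>) < c" using \<phi>le \<theta>c by simp
        ultimately show ?thesis by (meson ereal_less(2) less_ereal.simps(1) less_trans)
      next
        case False
        then have "(\<delta>/2)^2 \<le> (norm (z - y))^2" using \<delta> by (intro power_mono) simp_all
        then have "(\<delta>/2)^2 \<le> (z - y) \<bullet> (z - y)" by (simp add: power2_norm_eq_inner)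
        then have "Ksp * (\<delta>/2)^2 \<le> h z" unfolding h_def using Ksp by (intro mult_left_mono) simp_all
        moreover have "Ksp * (\<delta>/2)^2 = C\<^sub>1 + \<bar>c\<bar> + 1" unfolding Ksp_def using \<delta> by (simp add: power2_eq_square)
        moreover have "\<phi> (z, \<tau>) = \<theta> \<tau> - h z" unfolding \<phi>_def by simp
        moreover have "c \<le> \<bar>c\<bar>" by simp
        ultimately have "\<phi> (z, \<tau>) < - C\<^sub>1" using \<theta>c by linarith
        then show ?thesis using vlow by (meson ereal_less_eq(3) less_le_trans ereal_less(2) less_ereal.simps(1))
      qed
    qed
  qed
  obtain xs \<tau>s where qs: "qs = (xs, \<tau>s)" by (cases qs)
  have xsM: "xs \<in> M" and \<tau>s1: "s/2 \<le> \<tau>s" and \<tau>s2: "\<tau>s \<le> t" using qsQ unfolding qs Q_def by auto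
  have \<tau>sT: "ereal \<tau>s < T" using \<tau>s2 s(3) by (meson ereal_less_eq(3) le_less_trans)
  have \<tau>spos: "0 < \<tau>s" using \<tau>s1 s(1) by simp
  have pos_of_lt: "0 < \<Psi> (z, \<tau>)" if "ereal (\<phi> (z, \<tau>)) < v (z, \<tau>)" for z \<tau>
    unfolding \<Psi>_def using that by (cases "v (z, \<tau>)") auto
  have \<tau>st: "\<tau>s < t"
  proof (rule ccontr)
    assume "\<not> \<tau>s < t"
    then have "t \<le> \<tau>s" by simp
    then have "0 < \<Psi> qs" unfolding qs using outpos[OF xsM _ \<tau>sT] \<tau>spos pos_of_lt by simp
    then show False using \<Psi>qs by simp
  qed
  have qsdom: "(xs, \<tau>s) \<in> stdom M T" unfolding stdom_def using xsM \<tau>spos \<tau>sT by simp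
  have glob: "\<forall>z\<in>stdom M T. v (xs, \<tau>s) - ereal (\<phi> (xs, \<tau>s)) \<le> v z - ereal (\<phi> z)"
  proof
    fix z assume "z \<in> stdom M T"
    then obtain z1 \<tau> where z: "z = (z1, \<tau>)" "z1 \<in> M" "0 < \<tau>" "ereal \<tau> < T"
      unfolding stdom_def by auto
    show "v (xs, \<tau>s) - ereal (\<phi> (xs, \<tau>s)) \<le> v z - ereal (\<phi> z)"
    proof (cases "s/2 \<le> \<tau> \<and> \<tau> \<le> t")
      case True
      then have "z \<in> Q" unfolding Q_def z using z by simp
      then show ?thesis using qsmin unfolding \<Psi>_def qs by blast
    next
      case False
      then have "\<tau> < s/2 \<or> t \<le> \<tau>" by linarith
      then have "0 < \<Psi> z" unfolding z using outpos[OF z(2) _ z(4)] z(3) pos_of_lt by simp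
      then show ?thesis using \<Psi>qs unfolding \<Psi>_def qs by simp
    qed
  qed
  have vle: "v (xs, \<tau>s) \<le> ereal (\<phi> (xs, \<tau>s))"
    using \<Psi>qs unfolding \<Psi>_def qs by (cases "v (xs, \<tau>s)") auto
  have vlow: "ereal (- C\<^sub>1) \<le> v (xs, \<tau>s)" using vC1[OF xsM _ \<tau>sT] \<tau>spos by simp
  obtain u where u: "v (xs, \<tau>s) = ereal u" using vle vlow by (cases "v (xs, \<tau>s)") auto
  have uphi: "u \<le> \<phi> (xs, \<tau>s)" using vle u by simp
  have ulow: "- C\<^sub>1 \<le> u" using vlow u by simp
  have vfin: "v (xs, \<tau>s) \<noteq> \<infinity>" using u by simp
  obtain p where pT: "p \<in> tangent_space M xs"
    and pw: "\<forall>w\<in>tangent_space M xs. p \<bullet> w = (- (2 * Ksp) *\<^sub>R (xs - y)) \<bullet> w"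
    using tangent_proj[OF man xsM] by blast
  have pw': "\<forall>w\<in>tangent_space M xs. p \<bullet> w = \<phi>' (xs, \<tau>s) (w, 0)"
    using pw by (simp add: \<phi>'ap D\<phi>_def)
  have BJ: "\<phi>' (xs, \<tau>s) (0, 1) + H xs p (real_of_ereal (v (xs, \<tau>s))) \<le> 0"
    using sub unfolding BJ_subsol_def using C1t qsdom vfin glob pT pw' by blast
  then have ineq: "\<theta>' \<tau>s + H xs p u \<le> 0" using u by (simp add: \<phi>'ap D\<phi>_def)
  have "\<bar>H xs p u - H xs p 0\<bar> \<le> \<Lambda> * \<bar>u - 0\<bar>" by (rule H4[OF xsM pT])
  then have "- (H xs p u - H xs p 0) \<le> \<Lambda> * \<bar>u\<bar>" using abs_le_D2 by simp
  then have Hl: "H xs p u \<ge> - C\<^sub>0 - \<Lambda> * \<bar>u\<bar>" using HC0[OF xsM pT] by linarith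
  have absu: "\<bar>u\<bar> \<le> u + 2 * C\<^sub>1" using ulow C1pos by linarith
  have "\<Lambda> * \<bar>u\<bar> \<le> \<Lambda> * (u + 2 * C\<^sub>1)" using absu Lpos by (intro mult_left_mono) simp_all
  then have t1: "\<theta>' \<tau>s \<le> \<Lambda> * (u + C)" using ineq Hl LC by (simp add: algebra_simps)
  have "u \<le> \<theta> \<tau>s" using uphi hnn[of xs] unfolding \<phi>_def by simp
  then have t2: "\<Lambda> * (u + C) \<le> \<Lambda> * (\<theta> \<tau>s + C)" using Lpos by (intro mult_left_mono) simp_all
  have m0: "max 0 (\<tau>s - t) = 0" using \<tau>st by simp
  have pp0': "pp (\<tau>s - t) = 0" using pp0 \<tau>st by simp
  have "\<theta> \<tau>s + C = A * E \<tau>s - K1 * pp (s - \<tau>s)" unfolding \<theta>_def pp0' by simp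
  also have "\<dots> \<le> A * E \<tau>s" using K1 ppnn by simp
  finally have "\<Lambda> * (\<theta> \<tau>s + C) \<le> \<Lambda> * (A * E \<tau>s)" using Lpos by (intro mult_left_mono) simp_all
  also have "\<dots> < mu * (A * E \<tau>s)" using lamL Apos Epos[of \<tau>s] by simp
  also have "\<dots> \<le> \<theta>' \<tau>s"
  proof -
    have "\<theta>' \<tau>s = A * (mu * E \<tau>s) + K1 * (2 * max 0 (s - \<tau>s))" unfolding \<theta>'_def pp0' m0 by simp
    moreover have "K1 * (2 * max 0 (s - \<tau>s)) \<ge> 0" using K1 by simp
    ultimately show ?thesis by (simp add: algebra_simps)
  qed
  finally show False using t1 t2 by simp
qed



theorem lemma2p4:
  fixes M :: "'a::euclidean_space set"
    and H :: "'a \<Rightarrow> 'a \<Rightarrow> real \<Rightarrow> real"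
    and \<Lambda> C\<^sub>0 C\<^sub>1 :: real and T :: ereal
    and v :: "'a \<times> real \<Rightarrow> ereal" and y :: 'a
  assumes manifold: "closed_submanifold M"
    and H1: "continuous_on {(x, p, u). x \<in> M \<and> p \<in> tangent_space M x} (\<lambda>(x, p, u). H x p u)"
    and H2: "\<And>R. R > 0 \<Longrightarrow> \<exists>K>0. \<forall>x\<in>M. \<forall>p\<in>tangent_space M x. \<forall>u.
                \<bar>u\<bar> \<le> R \<and> norm p \<ge> K \<longrightarrow> H x p u > R"
    and H3: "\<And>x u. x \<in> M \<Longrightarrow> convex_on (tangent_space M x) (\<lambda>p. H x p u)"
    and Lpos: "\<Lambda> > 0"
    and H4: "\<And>x p u w. x \<in> M \<Longrightarrow> p \<in> tangent_space M x \<Longrightarrow> \<bar>H x p u - H x p w\<bar> \<le> \<Lambda> * \<bar>u - w\<bar>"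
    and Tpos: "T > 0"
    and lsc: "lsc_on (M \<times> {t. 0 \<le> t \<and> ereal t < T}) v"
    and sub: "BJ_subsol M H T v"
    and bdd: "\<exists>c::real. \<forall>x\<in>M. \<forall>t. 0 \<le> t \<and> ereal t < T \<longrightarrow> ereal c \<le> v (x, t)"
    and C0pos: "C\<^sub>0 > 0" and C1pos: "C\<^sub>1 > 0"
    and HC0: "\<And>x p. x \<in> M \<Longrightarrow> p \<in> tangent_space M x \<Longrightarrow> H x p 0 \<ge> - C\<^sub>0"
    and vC1: "\<And>x t. x \<in> M \<Longrightarrow> 0 \<le> t \<Longrightarrow> ereal t < T \<Longrightarrow> v (x, t) \<ge> ereal (- C\<^sub>1)"
    and yM: "y \<in> M"
  shows "(Liminf (at_right 0) (\<lambda>s. v (y, s)) < \<infinity> \<longrightarrow>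
           (\<forall>t. 0 < t \<and> ereal t < T \<longrightarrow>
              v (y, t) \<le> ereal (exp (\<Lambda> * t)) * Liminf (at_right 0) (\<lambda>s. v (y, s))
                        + ereal ((C\<^sub>0 / \<Lambda> + 2 * C\<^sub>1) * (exp (\<Lambda> * t) - 1))))
       \<and> (\<forall>s. 0 < s \<and> ereal s < T \<and> v (y, s) < \<infinity> \<longrightarrow>
           (\<forall>t. s < t \<and> ereal t < T \<longrightarrow>
              v (y, t) \<le> v (y, s) * ereal (exp (\<Lambda> * (t - s)))
                        + ereal ((C\<^sub>0 / \<Lambda> + 2 * C\<^sub>1) * (exp (\<Lambda> * (t - s)) - 1))))"
proof -
  define C where "C = C\<^sub>0 / \<Lambda> + 2 * C\<^sub>1"
  have PB: "v (y, t) \<le> ereal ((ws + C) * exp (\<Lambda> * (t - s)) - C)"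
    if "0 < s" "s < t" "ereal t < T" "v (y, s) = ereal ws" for s t ws
    unfolding C_def by (rule partb[OF manifold Lpos H4 lsc sub C0pos C1pos HC0 vC1 yM that])
  have C0L: "C\<^sub>0 / \<Lambda> > 0" using C0pos Lpos by simp
  have CC1: "C > C\<^sub>1" unfolding C_def using C0L C1pos by simp
  have partB: "\<forall>s. 0 < s \<and> ereal s < T \<and> v (y, s) < \<infinity> \<longrightarrow>
           (\<forall>t. s < t \<and> ereal t < T \<longrightarrow>
              v (y, t) \<le> v (y, s) * ereal (exp (\<Lambda> * (t - s)))
                        + ereal ((C\<^sub>0 / \<Lambda> + 2 * C\<^sub>1) * (exp (\<Lambda> * (t - s)) - 1)))"
  proof (intro allI impI)
    fix s t assume a: "0 < s \<and> ereal s < T \<and> v (y, s) < \<infinity>" and b: "s < t \<and> ereal t < T"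
    have "ereal (- C\<^sub>1) \<le> v (y, s)" using vC1[OF yM, of s] a by simp
    then obtain ws where ws: "v (y, s) = ereal ws" using a by (cases "v (y, s)") auto
    have "v (y, t) \<le> ereal ((ws + C) * exp (\<Lambda> * (t - s)) - C)"
      using PB[of s t ws] a b ws by simp
    also have "\<dots> = v (y, s) * ereal (exp (\<Lambda> * (t - s))) + ereal (C * (exp (\<Lambda> * (t - s)) - 1))"
      using ws by (simp add: algebra_simps)
    finally show "v (y, t) \<le> v (y, s) * ereal (exp (\<Lambda> * (t - s)))
                        + ereal ((C\<^sub>0 / \<Lambda> + 2 * C\<^sub>1) * (exp (\<Lambda> * (t - s)) - 1))"
      unfolding C_def .
  qed
  have partA: "Liminf (at_right 0) (\<lambda>s. v (y, s)) < \<infinity> \<longrightarrow>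
           (\<forall>t. 0 < t \<and> ereal t < T \<longrightarrow>
              v (y, t) \<le> ereal (exp (\<Lambda> * t)) * Liminf (at_right 0) (\<lambda>s. v (y, s))
                        + ereal ((C\<^sub>0 / \<Lambda> + 2 * C\<^sub>1) * (exp (\<Lambda> * t) - 1)))"
  proof (intro impI allI)
    fix t assume Lfin: "Liminf (at_right 0) (\<lambda>s. v (y, s)) < \<infinity>" and t: "0 < t \<and> ereal t < T"
    define L where "L = Liminf (at_right 0) (\<lambda>s. v (y, s))"
    have evT: "eventually (\<lambda>s. 0 < s \<and> s < t) (at_right (0::real))"
      unfolding eventually_at_right_field using t by blast
    have sT: "ereal s < T" if "s < t" for s
      using that t by (meson ereal_less_eq(3) less_imp_le le_less_trans)
    have evlow: "eventually (\<lambda>s. ereal (- C\<^sub>1) \<le> v (y, s)) (at_right (0::real))"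
    proof (rule eventually_mono[OF evT])
      fix s :: real assume "0 < s \<and> s < t"
      then show "ereal (- C\<^sub>1) \<le> v (y, s)" using vC1[OF yM, of s] sT[of s] by simp
    qed
    have Llow: "ereal (- C\<^sub>1) \<le> L" unfolding L_def by (rule Liminf_bounded[OF evlow])
    obtain l where l: "L = ereal l" using Lfin Llow unfolding L_def[symmetric] by (cases L) auto
    have key: "v (y, t) \<le> ereal ((l + \<epsilon> + C) * exp (\<Lambda> * t) - C)" if ep: "\<epsilon> > 0" for \<epsilon>
    proof -
      have fr: "frequently (\<lambda>s. v (y, s) < ereal (l + \<epsilon>)) (at_right (0::real))"
      proof (rule ccontr)
        assume "\<not> frequently (\<lambda>s. v (y, s) < ereal (l + \<epsilon>)) (at_right (0::real))"
        then have "eventually (\<lambda>s. ereal (l + \<epsilon>) \<le> v (y, s)) (at_right (0::real))"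
          by (simp add: not_frequently not_less)
        then have "ereal (l + \<epsilon>) \<le> L" unfolding L_def by (rule Liminf_bounded)
        then show False using l ep by simp
      qed
      have "frequently (\<lambda>s. v (y, s) < ereal (l + \<epsilon>) \<and> (0 < s \<and> s < t)) (at_right (0::real))"
        by (rule frequently_eventually_frequently[OF fr evT])
      then obtain s where s: "v (y, s) < ereal (l + \<epsilon>)" "0 < s" "s < t"
        using frequently_ex by blast
      have "ereal (- C\<^sub>1) \<le> v (y, s)" using vC1[OF yM, of s] sT[of s] s by simp
      then obtain ws where ws: "v (y, s) = ereal ws" using s(1) by (cases "v (y, s)") auto
      have ws1: "- C\<^sub>1 \<le> ws" "ws < l + \<epsilon>" using \<open>ereal (- C\<^sub>1) \<le> v (y, s)\<close> s(1) ws by simp_all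
      have "v (y, t) \<le> ereal ((ws + C) * exp (\<Lambda> * (t - s)) - C)"
        using PB[of s t ws] s t ws by simp
      also have "(ws + C) * exp (\<Lambda> * (t - s)) \<le> (l + \<epsilon> + C) * exp (\<Lambda> * t)"
      proof (rule mult_mono)
        show "ws + C \<le> l + \<epsilon> + C" using ws1 by simp
        show "exp (\<Lambda> * (t - s)) \<le> exp (\<Lambda> * t)" using Lpos s(2) by (simp add: mult_left_mono)
        show "0 \<le> l + \<epsilon> + C" using ws1 CC1 by simp
        show "0 \<le> exp (\<Lambda> * (t - s))" by simp
      qed
      then have "ereal ((ws + C) * exp (\<Lambda> * (t - s)) - C) \<le> ereal ((l + \<epsilon> + C) * exp (\<Lambda> * t) - C)"
        by simp
      finally show ?thesis .
    qed
    have "v (y, t) \<noteq> \<infinity>" using key[of 1] by auto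
    moreover have "ereal (- C\<^sub>1) \<le> v (y, t)" using vC1[OF yM, of t] t by simp
    ultimately obtain vt where vt: "v (y, t) = ereal vt" by (cases "v (y, t)") auto
    have "vt \<le> (l + C) * exp (\<Lambda> * t) - C"
    proof (rule field_le_epsilon)
      fix e :: real assume e: "0 < e"
      define \<epsilon> where "\<epsilon> = e / exp (\<Lambda> * t)"
      have "\<epsilon> > 0" unfolding \<epsilon>_def using e by simp
      then have "vt \<le> (l + \<epsilon> + C) * exp (\<Lambda> * t) - C" using key[of \<epsilon>] vt by simp
      also have "\<dots> = (l + C) * exp (\<Lambda> * t) - C + e" unfolding \<epsilon>_def by (simp add: algebra_simps)
      finally show "vt \<le> (l + C) * exp (\<Lambda> * t) - C + e" .
    qed
    then have "v (y, t) \<le> ereal (exp (\<Lambda> * t) * l + C * (exp (\<Lambda> * t) - 1))"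
      using vt by (simp add: algebra_simps)
    also have "\<dots> = ereal (exp (\<Lambda> * t)) * L + ereal ((C\<^sub>0 / \<Lambda> + 2 * C\<^sub>1) * (exp (\<Lambda> * t) - 1))"
      using l unfolding C_def by simp
    finally show "v (y, t) \<le> ereal (exp (\<Lambda> * t)) * Liminf (at_right 0) (\<lambda>s. v (y, s))
                        + ereal ((C\<^sub>0 / \<Lambda> + 2 * C\<^sub>1) * (exp (\<Lambda> * t) - 1))"
      unfolding L_def .
  qed
  show ?thesis using partA partB by (rule conjI)
qed


end
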